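(* Let $\mathbb{K}$ be a field. Every variety $X_{\mathbb{E}_6}(\boldsymbol{\alpha})$ (with $\boldsymbol{\alpha}$ a family of invertible elements of $\mathbb{K}$) is isomorphic to $X_{\mathbb{E}_6}(1,\dots,1)$. Every variety $X_{\mathbb{E}_7}(\boldsymbol{\alpha})$ is isomorphic to $X_{\mathbb{E}_7}(1,\dots,1,\alpha)$ for some $\alpha\in\mathbb{K}^*$, where $\alpha$ is the value on the last vertex (the leaf) of the long branch of $\mathbb{E}_7$ and all other values are $1$. Every variety $X_{\mathbb{E}_8}(\boldsymbol{\alpha})$ is isomorphic to $X_{\mathbb{E}_8}(1,\dots,1)$.
   Context: For a finite tree $T$ and a family $\boldsymbol{\alpha}=(\alpha_t)_{t\in T}$ of invertible elements of $\mathbb{K}$, $X_T(\boldsymbol{\alpha})$ is the affine variety over $\mathbb{K}$ with coordinates $x_t,x'_t$ ($t\in T$) defined by $x_tx'_t=1+\alpha_t\prod_{s-t}x_s$, the product over the neighbors $s$ of $t$. For $m=6,7,8$, $\mathbb{E}_m$ is the tree with a central vertex from which three branches (paths) emanate, containing $1$, $2$ and $m-4$ further vertices respectively; the long branch is the one with $m-4$ vertices. *)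

theory Defs
  imports "HOL-Library.Poly_Mapping"
begin

type_synonym 'a mpoly = "(nat \<Rightarrow>\<^sub>0 nat) \<Rightarrow>\<^sub>0 'a"

definition Var :: "nat \<Rightarrow> 'a::comm_ring_1 mpoly" where
  "Var i = Poly_Mapping.single (Poly_Mapping.single i 1) 1"

definition Const :: "'a::comm_ring_1 \<Rightarrow> 'a mpoly" where
  "Const c = Poly_Mapping.single 0 c"

definition vars :: "'a::comm_ring_1 mpoly \<Rightarrow> nat set" where
  "vars p = \<Union> (Poly_Mapping.keys ` Poly_Mapping.keys p)"

definition subst :: "(nat \<Rightarrow> 'a::comm_ring_1 mpoly) \<Rightarrow> 'a mpoly \<Rightarrow> 'a mpoly" where
  "subst \<sigma> p = (\<Sum>m\<in>Poly_Mapping.keys p.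
      Const (Poly_Mapping.lookup p m) * (\<Prod>i\<in>Poly_Mapping.keys m. \<sigma> i ^ Poly_Mapping.lookup m i))"

definition gen_ideal :: "nat set \<Rightarrow> 'a::comm_ring_1 mpoly set \<Rightarrow> 'a mpoly set" where
  "gen_ideal C G = {p. \<exists>c. (\<forall>g\<in>G. vars (c g) \<subseteq> C) \<and> p = (\<Sum>g\<in>G. c g * g)}"

text \<open>Isomorphism of the affine varieties Spec K[x_C1]/(G1) and Spec K[x_C2]/(G2):
  polynomial maps F (from the first to the second) and H (back) which are well
  defined on the quotient rings and mutually inverse modulo the ideals.\<close>
definition affine_iso :: "nat set \<Rightarrow> 'a::field mpoly set \<Rightarrow> nat set \<Rightarrow> 'a mpoly set \<Rightarrow> bool" where
  "affine_iso C1 G1 C2 G2 \<longleftrightarrow>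
     (\<exists>F H. (\<forall>i\<in>C2. vars (F i) \<subseteq> C1) \<and> (\<forall>j\<in>C1. vars (H j) \<subseteq> C2) \<and>
        (\<forall>g\<in>G2. subst F g \<in> gen_ideal C1 G1) \<and>
        (\<forall>g\<in>G1. subst H g \<in> gen_ideal C2 G2) \<and>
        (\<forall>j\<in>C1. subst F (H j) - Var j \<in> gen_ideal C1 G1) \<and>
        (\<forall>i\<in>C2. subst H (F i) - Var i \<in> gen_ideal C2 G2))"

text \<open>Coordinates of X_T: x_t is variable 2t, x'_t is variable 2t+1.\<close>
definition tree_coords :: "nat set \<Rightarrow> nat set" where
  "tree_coords V = (\<lambda>t. 2*t) ` V \<union> (\<lambda>t. 2*t+1) ` V"

definition tree_gens :: "nat set \<Rightarrow> (nat \<Rightarrow> nat \<Rightarrow> bool) \<Rightarrow> (nat \<Rightarrow> 'a::field) \<Rightarrow> 'a mpoly set" where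
  "tree_gens V adj \<alpha> = (\<lambda>t. Var (2*t) * Var (2*t+1) - 1
       - Const (\<alpha> t) * (\<Prod>s\<in>{s\<in>V. adj s t}. Var (2*s))) ` V"

definition X_iso :: "nat set \<Rightarrow> (nat \<Rightarrow> nat \<Rightarrow> bool) \<Rightarrow> (nat \<Rightarrow> 'a::field) \<Rightarrow> (nat \<Rightarrow> 'a) \<Rightarrow> bool" where
  "X_iso V adj \<alpha> \<beta> = affine_iso (tree_coords V) (tree_gens V adj \<alpha>) (tree_coords V) (tree_gens V adj \<beta>)"

text \<open>The tree E_m on vertices 0..m-1: centre 0; short branch 1; branch 2-3;
  long branch 4-5-...-(m-1), whose leaf is m-1.\<close>
definition E_edge :: "nat \<Rightarrow> nat \<Rightarrow> nat \<Rightarrow> bool" where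
  "E_edge m s t \<longleftrightarrow> (s,t) \<in> {(0,1),(0,2),(2,3),(0,4)} \<or> (4 \<le> s \<and> t = s+1 \<and> t < m)"

definition E_adj :: "nat \<Rightarrow> nat \<Rightarrow> nat \<Rightarrow> bool" where
  "E_adj m s t \<longleftrightarrow> s < m \<and> t < m \<and> (E_edge m s t \<or> E_edge m t s)"

end

theory Submission
  imports Defs
begin


definition mono :: "(nat \<Rightarrow> 'a::comm_ring_1 mpoly) \<Rightarrow> (nat \<Rightarrow>\<^sub>0 nat) \<Rightarrow> 'a mpoly" where
  "mono \<sigma> m = (\<Prod>i\<in>Poly_Mapping.keys m. \<sigma> i ^ Poly_Mapping.lookup m i)"

lemma mono_sup: "finite S \<Longrightarrow> Poly_Mapping.keys m \<subseteq> S \<Longrightarrow>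
   mono \<sigma> m = (\<Prod>i\<in>S. \<sigma> i ^ Poly_Mapping.lookup m i)"
  unfolding mono_def
  by (rule prod.mono_neutral_left) (auto simp: in_keys_iff)

lemma mono_add: "mono \<sigma> (a + b) = mono \<sigma> a * mono \<sigma> b"
proof -
  let ?S = "Poly_Mapping.keys a \<union> Poly_Mapping.keys b"
  have "mono \<sigma> (a + b) = (\<Prod>i\<in>?S. \<sigma> i ^ Poly_Mapping.lookup (a+b) i)"
    using keys_add[of a b] by (intro mono_sup) auto
  also have "\<dots> = (\<Prod>i\<in>?S. \<sigma> i ^ Poly_Mapping.lookup a i) * (\<Prod>i\<in>?S. \<sigma> i ^ Poly_Mapping.lookup b i)"
    by (simp add: lookup_add power_add prod.distrib)
  also have "\<dots> = mono \<sigma> a * mono \<sigma> b"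
    by (subst (1 2) mono_sup[symmetric]) auto
  finally show ?thesis .
qed

lemma mono_zero [simp]: "mono \<sigma> 0 = 1"
  by (simp add: mono_def)

lemma mono_single: "mono \<sigma> (Poly_Mapping.single i 1) = \<sigma> i"
  proof -
  have "Poly_Mapping.keys (Poly_Mapping.single i (1::nat)) = {i}" by simp
  then show ?thesis by (simp add: mono_def)
qed

lemma Const_add: "Const (a + b) = Const a + Const b"
  by (simp add: Const_def single_add)
lemma Const_diff: "Const (a - b) = Const a - Const b"
  by (simp add: Const_def single_diff)
lemma Const_mult: "Const (a * b) = Const a * Const b"
  by (simp add: Const_def mult_single)
lemma Const_0 [simp]: "Const 0 = 0"
  by (simp add: Const_def)
lemma Const_1 [simp]: "Const 1 = 1"
  by (simp add: Const_def)
lemma Const_prod: "Const (\<Prod>i\<in>A. f i) = (\<Prod>i\<in>A. Const (f i))"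
  by (induction A rule: infinite_finite_induct) (auto simp: Const_mult)

lemma subst_mono: "subst \<sigma> p = (\<Sum>m\<in>Poly_Mapping.keys p. Const (Poly_Mapping.lookup p m) * mono \<sigma> m)"
  by (simp add: subst_def mono_def)

lemma subst_sup: "finite S \<Longrightarrow> Poly_Mapping.keys p \<subseteq> S \<Longrightarrow>
   subst \<sigma> p = (\<Sum>m\<in>S. Const (Poly_Mapping.lookup p m) * mono \<sigma> m)"
  unfolding subst_mono
  by (rule sum.mono_neutral_left) (auto simp: in_keys_iff)

lemma subst_add: "subst \<sigma> (p + q) = subst \<sigma> p + subst \<sigma> q"
proof -
  let ?S = "Poly_Mapping.keys p \<union> Poly_Mapping.keys q"
  have "subst \<sigma> (p + q) = (\<Sum>m\<in>?S. Const (Poly_Mapping.lookup (p+q) m) * mono \<sigma> m)"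
    using keys_add[of p q] by (intro subst_sup) auto
  also have "\<dots> = (\<Sum>m\<in>?S. Const (Poly_Mapping.lookup p m) * mono \<sigma> m) + (\<Sum>m\<in>?S. Const (Poly_Mapping.lookup q m) * mono \<sigma> m)"
    by (simp add: lookup_add Const_add distrib_right sum.distrib)
  also have "\<dots> = subst \<sigma> p + subst \<sigma> q"
    by (subst (1 2) subst_sup[symmetric]) auto
  finally show ?thesis .
qed

lemma subst_0 [simp]: "subst \<sigma> 0 = 0"
  by (simp add: subst_def)

lemma subst_uminus: "subst \<sigma> (- p) = - subst \<sigma> p"
  using subst_add[of \<sigma> p "-p"] by (simp add: add_eq_0_iff2)

lemma subst_diff: "subst \<sigma> (p - q) = subst \<sigma> p - subst \<sigma> q"
  using subst_add[of \<sigma> p "-q"] by (simp add: subst_uminus)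

lemma subst_sum: "subst \<sigma> (\<Sum>i\<in>A. f i) = (\<Sum>i\<in>A. subst \<sigma> (f i))"
  by (induction A rule: infinite_finite_induct) (auto simp: subst_add)

lemma subst_single: "subst \<sigma> (Poly_Mapping.single m c) = Const c * mono \<sigma> m"
  by (subst subst_sup[of "{m}"]) auto

lemma decomp: "p = (\<Sum>m\<in>Poly_Mapping.keys p. Poly_Mapping.single m (Poly_Mapping.lookup p m))"
  by (rule poly_mapping_eqI) (simp add: lookup_sum lookup_single when_def in_keys_iff)

lemma subst_mult: "subst \<sigma> (p * q) = subst \<sigma> p * subst \<sigma> q"
proof -
  let ?P = "Poly_Mapping.keys p" and ?Q = "Poly_Mapping.keys q"
  have "p * q = (\<Sum>a\<in>?P. Poly_Mapping.single a (Poly_Mapping.lookup p a)) *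
                (\<Sum>b\<in>?Q. Poly_Mapping.single b (Poly_Mapping.lookup q b))"
    by (subst (1) decomp, subst (2) decomp) (rule refl)
  also have "\<dots> = (\<Sum>a\<in>?P. \<Sum>b\<in>?Q. Poly_Mapping.single (a+b) (Poly_Mapping.lookup p a * Poly_Mapping.lookup q b))"
    by (simp add: sum_product mult_single)
  finally have pq: "p * q = \<dots>" .
  have "subst \<sigma> (p * q) = (\<Sum>a\<in>?P. \<Sum>b\<in>?Q. (Const (Poly_Mapping.lookup p a) * mono \<sigma> a) * (Const (Poly_Mapping.lookup q b) * mono \<sigma> b))"
    by (simp add: pq subst_sum subst_single Const_mult mono_add mult_ac)
  also have "\<dots> = subst \<sigma> p * subst \<sigma> q"
    by (simp add: subst_mono sum_product)
  finally show ?thesis .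
qed

lemma subst_1 [simp]: "subst \<sigma> 1 = 1"
  by (simp add: subst_def)

lemma subst_prod: "subst \<sigma> (\<Prod>i\<in>A. f i) = (\<Prod>i\<in>A. subst \<sigma> (f i))"
  by (induction A rule: infinite_finite_induct) (auto simp: subst_mult)

lemma subst_Var [simp]: "subst \<sigma> (Var i) = \<sigma> i"
  unfolding Var_def subst_single mono_single by simp

lemma subst_Const [simp]: "subst \<sigma> (Const c) = Const c"
  by (simp add: Const_def subst_single)

lemma Const_Var: "Const c * Var j = Poly_Mapping.single (Poly_Mapping.single j 1) c"
  by (simp add: Const_def Var_def mult_single)

lemma vars_Const_Var: "vars (Const c * Var j) \<subseteq> {j}"
  by (simp add: Const_Var vars_def)

lemma vars_0 [simp]: "vars 0 = {}" by (simp add: vars_def)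
lemma vars_1 [simp]: "vars 1 = {}" by (simp add: vars_def)



definition sc :: "(nat \<Rightarrow> 'a::field) \<Rightarrow> nat \<Rightarrow> 'a" where
  "sc \<mu> j = (if even j then \<mu> (j div 2) else inverse (\<mu> (j div 2)))"

definition scale :: "(nat \<Rightarrow> 'a::field) \<Rightarrow> nat \<Rightarrow> 'a mpoly" where
  "scale \<mu> j = Const (sc \<mu> j) * Var j"

lemma mem_ideal: "finite G \<Longrightarrow> g \<in> G \<Longrightarrow> g \<in> gen_ideal C G"
  unfolding gen_ideal_def
proof (rule CollectI, rule exI[of _ "\<lambda>h. if h = g then 1 else 0"], intro conjI)
  assume "finite G" "g \<in> G"
  have "(\<Sum>h\<in>G. (if h = g then 1 else 0) * h) = (\<Sum>h\<in>G. if h = g then h else 0)"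
    by (rule sum.cong) auto
  also have "\<dots> = g" using \<open>finite G\<close> \<open>g \<in> G\<close> by (simp add: sum.delta')
  finally show "g = (\<Sum>h\<in>G. (if h = g then 1 else 0) * h)" by simp
qed auto

lemma zero_ideal: "0 \<in> gen_ideal C G"
  unfolding gen_ideal_def by (rule CollectI, rule exI[of _ "\<lambda>h. 0"]) auto

lemma gen_scale:
  assumes "t \<in> V" "\<mu> t \<noteq> 0" "\<beta> t * (\<Prod>s\<in>{s\<in>V. adj s t}. \<mu> s) = \<alpha> t"
  shows "subst (scale \<mu>) (Var (2*t) * Var (2*t+1) - 1 - Const (\<beta> t) * (\<Prod>s\<in>{s\<in>V. adj s t}. Var (2*s)))
       = Var (2*t) * Var (2*t+1) - 1 - Const (\<alpha> t) * (\<Prod>s\<in>{s\<in>V. adj s t}. Var (2*s))"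
proof -
  have 1: "scale \<mu> (2*t) * scale \<mu> (2*t+1) = Var (2*t) * Var (2*t+1)"
    using assms(2) by (simp add: scale_def sc_def mult.commute mult.left_commute Const_mult[symmetric])
  have 2: "(\<Prod>s\<in>{s\<in>V. adj s t}. scale \<mu> (2*s)) = Const (\<Prod>s\<in>{s\<in>V. adj s t}. \<mu> s) * (\<Prod>s\<in>{s\<in>V. adj s t}. Var (2*s))"
    by (simp add: scale_def sc_def prod.distrib Const_prod)
  show ?thesis
    unfolding subst_diff subst_mult subst_prod subst_Var subst_1 subst_Const 1 2
    by (simp add: mult.assoc[symmetric] Const_mult[symmetric] assms(3))
qed

lemma iso_scale:
  fixes \<alpha> \<beta> \<mu> :: "nat \<Rightarrow> 'a::field"
  assumes fin: "finite V" and nz: "\<forall>t\<in>V. \<mu> t \<noteq> 0"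
    and eq: "\<forall>t\<in>V. \<beta> t * (\<Prod>s\<in>{s\<in>V. adj s t}. \<mu> s) = \<alpha> t"
  shows "X_iso V adj \<alpha> \<beta>"
proof -
  let ?\<nu> = "\<lambda>t. inverse (\<mu> t)"
  have eq2: "\<forall>t\<in>V. \<alpha> t * (\<Prod>s\<in>{s\<in>V. adj s t}. ?\<nu> s) = \<beta> t"
  proof
    fix t assume t: "t \<in> V"
    have "(\<Prod>s\<in>{s\<in>V. adj s t}. \<mu> s * ?\<nu> s) = 1"
      by (rule prod.neutral) (use nz in auto)
    then have P: "(\<Prod>s\<in>{s\<in>V. adj s t}. \<mu> s) * (\<Prod>s\<in>{s\<in>V. adj s t}. ?\<nu> s) = 1"
      by (simp only: prod.distrib)
    have "\<alpha> t * (\<Prod>s\<in>{s\<in>V. adj s t}. ?\<nu> s) = \<beta> t * ((\<Prod>s\<in>{s\<in>V. adj s t}. \<mu> s) * (\<Prod>s\<in>{s\<in>V. adj s t}. ?\<nu> s))"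
      using eq t by (simp only: mult.assoc[symmetric])
    then show "\<alpha> t * (\<Prod>s\<in>{s\<in>V. adj s t}. ?\<nu> s) = \<beta> t"
      by (simp only: P mult_1_right)
  qed
  have nz2: "\<forall>t\<in>V. ?\<nu> t \<noteq> 0" using nz by simp
  have fing: "finite (tree_gens V adj \<gamma>)" for \<gamma> :: "nat \<Rightarrow> 'a"
    using fin by (simp add: tree_gens_def)
  have G: "\<forall>g\<in>tree_gens V adj \<gamma>'. subst (scale \<rho>) g \<in> gen_ideal C (tree_gens V adj \<gamma>)"
    if "\<forall>t\<in>V. \<rho> t \<noteq> 0" "\<forall>t\<in>V. \<gamma>' t * (\<Prod>s\<in>{s\<in>V. adj s t}. \<rho> s) = \<gamma> t" for \<rho> \<gamma> \<gamma>' :: "nat \<Rightarrow> 'a" and C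
  proof
    fix g assume "g \<in> tree_gens V adj \<gamma>'"
    then obtain t where t: "t \<in> V" and g: "g = Var (2*t) * Var (2*t+1) - 1 - Const (\<gamma>' t) * (\<Prod>s\<in>{s\<in>V. adj s t}. Var (2*s))"
      by (auto simp: tree_gens_def)
    have "subst (scale \<rho>) g = Var (2*t) * Var (2*t+1) - 1 - Const (\<gamma> t) * (\<Prod>s\<in>{s\<in>V. adj s t}. Var (2*s))"
      unfolding g using that t by (intro gen_scale) auto
    also have "\<dots> \<in> tree_gens V adj \<gamma>" using t by (auto simp: tree_gens_def)
    finally show "subst (scale \<rho>) g \<in> gen_ideal C (tree_gens V adj \<gamma>)"
      using fing by (intro mem_ideal) auto
  qed
  have vars: "\<forall>i\<in>tree_coords V. vars (scale \<rho> i) \<subseteq> tree_coords V" for \<rho> :: "nat \<Rightarrow> 'a"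
    using vars_Const_Var unfolding scale_def by blast
  have inv: "\<forall>j\<in>tree_coords V. subst (scale \<rho>) (scale \<rho>' j) - Var j \<in> gen_ideal (tree_coords V) G"
    if "\<forall>t\<in>V. \<rho> t \<noteq> 0" "\<forall>t\<in>V. \<rho>' t = inverse (\<rho> t)" for \<rho> \<rho>' and G :: "'a mpoly set"
  proof
    fix j assume j: "j \<in> tree_coords V"
    then have "j div 2 \<in> V" by (auto simp: tree_coords_def)
    then have "sc \<rho>' j * sc \<rho> j = 1" using that by (auto simp: sc_def)
    then have "subst (scale \<rho>) (scale \<rho>' j) - Var j = 0"
      by (simp add: scale_def subst_mult mult.assoc[symmetric] Const_mult[symmetric])
    then show "subst (scale \<rho>) (scale \<rho>' j) - Var j \<in> gen_ideal (tree_coords V) G"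
      using zero_ideal by metis
  qed
  show ?thesis
    unfolding X_iso_def affine_iso_def
    apply (rule exI[of _ "scale \<mu>"], rule exI[of _ "scale ?\<nu>"])
    apply (intro conjI vars G inv)
    using nz nz2 eq eq2 by auto
qed



lemma E6:
  fixes \<alpha> :: "nat \<Rightarrow> 'a::field"
  assumes nz: "\<forall>t<6. \<alpha> t \<noteq> 0"
  shows "X_iso {..<6} (E_adj 6) \<alpha> (\<lambda>_. 1)"
proof (rule iso_scale[where \<mu> = "\<lambda>t. if t=0 then \<alpha> 1 else if t=1 then \<alpha> 0 / (\<alpha> 3 * \<alpha> 5) else if t=2 then \<alpha> 3 else if t=3 then \<alpha> 2 / \<alpha> 1 else if t=4 then \<alpha> 5 else \<alpha> 4 / \<alpha> 1"])
  have n0: "{s\<in>{..<6::nat}. E_adj 6 s 0} = {1,2,4}" by (auto simp: E_adj_def E_edge_def)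
  have n1: "{s\<in>{..<6::nat}. E_adj 6 s 1} = {0}" by (auto simp: E_adj_def E_edge_def)
  have n2: "{s\<in>{..<6::nat}. E_adj 6 s 2} = {0,3}" by (auto simp: E_adj_def E_edge_def)
  have n3: "{s\<in>{..<6::nat}. E_adj 6 s 3} = {2}" by (auto simp: E_adj_def E_edge_def)
  have n4: "{s\<in>{..<6::nat}. E_adj 6 s 4} = {0,5}" by (auto simp: E_adj_def E_edge_def)
  have n5: "{s\<in>{..<6::nat}. E_adj 6 s 5} = {4}" by (auto simp: E_adj_def E_edge_def)
  have a: "\<alpha> 0 \<noteq> 0" "\<alpha> 1 \<noteq> 0" "\<alpha> 2 \<noteq> 0" "\<alpha> 3 \<noteq> 0" "\<alpha> 4 \<noteq> 0" "\<alpha> 5 \<noteq> 0"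
    using nz by auto
  show "finite {..<6::nat}" by simp
  show "\<forall>t\<in>{..<6::nat}. (if t=0 then \<alpha> 1 else if t=1 then \<alpha> 0 / (\<alpha> 3 * \<alpha> 5) else if t=2 then \<alpha> 3 else if t=3 then \<alpha> 2 / \<alpha> 1 else if t=4 then \<alpha> 5 else \<alpha> 4 / \<alpha> 1) \<noteq> 0" (is "\<forall>t\<in>_. ?Q t")
  proof
    fix t assume "t \<in> {..<6::nat}"
    then have "t=0 \<or> t=1 \<or> t=2 \<or> t=3 \<or> t=4 \<or> t=5" by auto
    then show "?Q t" using a
      by (elim disjE; hypsubst; simp)
  qed
  show "\<forall>t\<in>{..<6}. (\<lambda>_. 1) t * (\<Prod>s\<in>{s\<in>{..<6}. E_adj 6 s t}. (if s=0 then \<alpha> 1 else if s=1 then \<alpha> 0 / (\<alpha> 3 * \<alpha> 5) else if s=2 then \<alpha> 3 else if s=3 then \<alpha> 2 / \<alpha> 1 else if s=4 then \<alpha> 5 else \<alpha> 4 / \<alpha> 1)) = \<alpha> t" (is "\<forall>t\<in>_. ?P t")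
  proof
    fix t assume "t \<in> {..<6::nat}"
    then have "t=0 \<or> t=1 \<or> t=2 \<or> t=3 \<or> t=4 \<or> t=5" by auto
    then show "?P t" using a
      by (elim disjE; hypsubst; simp only: n0 n1 n2 n3 n4 n5; simp add: field_simps)
  qed
qed

lemma E7:
  fixes \<alpha> :: "nat \<Rightarrow> 'a::field"
  assumes nz: "\<forall>t<7. \<alpha> t \<noteq> 0"
  shows "X_iso {..<7} (E_adj 7) \<alpha> (\<lambda>t. if t = 6 then \<alpha> 6 * \<alpha> 1 / \<alpha> 4 else 1)"
proof (rule iso_scale[where \<mu> = "\<lambda>t. if t=0 then \<alpha> 1 else if t=1 then \<alpha> 0 / \<alpha> 3 else if t=2 then \<alpha> 3 else if t=3 then \<alpha> 2 / \<alpha> 1 else if t=4 then 1 else if t=5 then \<alpha> 4 / \<alpha> 1 else \<alpha> 5"])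
  have n0: "{s\<in>{..<7::nat}. E_adj 7 s 0} = {1,2,4}" by (auto simp: E_adj_def E_edge_def)
  have n1: "{s\<in>{..<7::nat}. E_adj 7 s 1} = {0}" by (auto simp: E_adj_def E_edge_def)
  have n2: "{s\<in>{..<7::nat}. E_adj 7 s 2} = {0,3}" by (auto simp: E_adj_def E_edge_def)
  have n3: "{s\<in>{..<7::nat}. E_adj 7 s 3} = {2}" by (auto simp: E_adj_def E_edge_def)
  have n4: "{s\<in>{..<7::nat}. E_adj 7 s 4} = {0,5}" by (auto simp: E_adj_def E_edge_def)
  have n5: "{s\<in>{..<7::nat}. E_adj 7 s 5} = {4,6}" by (auto simp: E_adj_def E_edge_def)
  have n6: "{s\<in>{..<7::nat}. E_adj 7 s 6} = {5}" by (auto simp: E_adj_def E_edge_def)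
  have a: "\<alpha> 0 \<noteq> 0" "\<alpha> 1 \<noteq> 0" "\<alpha> 2 \<noteq> 0" "\<alpha> 3 \<noteq> 0" "\<alpha> 4 \<noteq> 0" "\<alpha> 5 \<noteq> 0" "\<alpha> 6 \<noteq> 0"
    using nz by auto
  show "finite {..<7::nat}" by simp
  show "\<forall>t\<in>{..<7::nat}. (if t=0 then \<alpha> 1 else if t=1 then \<alpha> 0 / \<alpha> 3 else if t=2 then \<alpha> 3 else if t=3 then \<alpha> 2 / \<alpha> 1 else if t=4 then 1 else if t=5 then \<alpha> 4 / \<alpha> 1 else \<alpha> 5) \<noteq> 0" (is "\<forall>t\<in>_. ?Q t")
  proof
    fix t assume "t \<in> {..<7::nat}"
    then have "t=0 \<or> t=1 \<or> t=2 \<or> t=3 \<or> t=4 \<or> t=5 \<or> t=6" by auto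
    then show "?Q t" using a
      by (elim disjE; hypsubst; simp)
  qed
  show "\<forall>t\<in>{..<7}. (\<lambda>t. if t = 6 then \<alpha> 6 * \<alpha> 1 / \<alpha> 4 else 1) t * (\<Prod>s\<in>{s\<in>{..<7}. E_adj 7 s t}. (if s=0 then \<alpha> 1 else if s=1 then \<alpha> 0 / \<alpha> 3 else if s=2 then \<alpha> 3 else if s=3 then \<alpha> 2 / \<alpha> 1 else if s=4 then 1 else if s=5 then \<alpha> 4 / \<alpha> 1 else \<alpha> 5)) = \<alpha> t" (is "\<forall>t\<in>_. ?P t")
  proof
    fix t assume "t \<in> {..<7::nat}"
    then have "t=0 \<or> t=1 \<or> t=2 \<or> t=3 \<or> t=4 \<or> t=5 \<or> t=6" by auto
    then show "?P t" using a
      by (elim disjE; hypsubst; simp only: n0 n1 n2 n3 n4 n5 n6; simp add: field_simps)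
  qed
qed

lemma E8:
  fixes \<alpha> :: "nat \<Rightarrow> 'a::field"
  assumes nz: "\<forall>t<8. \<alpha> t \<noteq> 0"
  shows "X_iso {..<8} (E_adj 8) \<alpha> (\<lambda>_. 1)"
proof (rule iso_scale[where \<mu> = "\<lambda>t. if t=0 then \<alpha> 1 else if t=1 then \<alpha> 0 * \<alpha> 7 / (\<alpha> 3 * \<alpha> 5) else if t=2 then \<alpha> 3 else if t=3 then \<alpha> 2 / \<alpha> 1 else if t=4 then \<alpha> 5 / \<alpha> 7 else if t=5 then \<alpha> 4 / \<alpha> 1 else if t=6 then \<alpha> 7 else \<alpha> 6 * \<alpha> 1 / \<alpha> 4"])
  have n0: "{s\<in>{..<8::nat}. E_adj 8 s 0} = {1,2,4}" by (auto simp: E_adj_def E_edge_def)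
  have n1: "{s\<in>{..<8::nat}. E_adj 8 s 1} = {0}" by (auto simp: E_adj_def E_edge_def)
  have n2: "{s\<in>{..<8::nat}. E_adj 8 s 2} = {0,3}" by (auto simp: E_adj_def E_edge_def)
  have n3: "{s\<in>{..<8::nat}. E_adj 8 s 3} = {2}" by (auto simp: E_adj_def E_edge_def)
  have n4: "{s\<in>{..<8::nat}. E_adj 8 s 4} = {0,5}" by (auto simp: E_adj_def E_edge_def)
  have n5: "{s\<in>{..<8::nat}. E_adj 8 s 5} = {4,6}" by (auto simp: E_adj_def E_edge_def)
  have n6: "{s\<in>{..<8::nat}. E_adj 8 s 6} = {5,7}" by (auto simp: E_adj_def E_edge_def)
  have n7: "{s\<in>{..<8::nat}. E_adj 8 s 7} = {6}" by (auto simp: E_adj_def E_edge_def)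
  have a: "\<alpha> 0 \<noteq> 0" "\<alpha> 1 \<noteq> 0" "\<alpha> 2 \<noteq> 0" "\<alpha> 3 \<noteq> 0" "\<alpha> 4 \<noteq> 0" "\<alpha> 5 \<noteq> 0" "\<alpha> 6 \<noteq> 0" "\<alpha> 7 \<noteq> 0"
    using nz by auto
  show "finite {..<8::nat}" by simp
  show "\<forall>t\<in>{..<8::nat}. (if t=0 then \<alpha> 1 else if t=1 then \<alpha> 0 * \<alpha> 7 / (\<alpha> 3 * \<alpha> 5) else if t=2 then \<alpha> 3 else if t=3 then \<alpha> 2 / \<alpha> 1 else if t=4 then \<alpha> 5 / \<alpha> 7 else if t=5 then \<alpha> 4 / \<alpha> 1 else if t=6 then \<alpha> 7 else \<alpha> 6 * \<alpha> 1 / \<alpha> 4) \<noteq> 0" (is "\<forall>t\<in>_. ?Q t")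
  proof
    fix t assume "t \<in> {..<8::nat}"
    then have "t=0 \<or> t=1 \<or> t=2 \<or> t=3 \<or> t=4 \<or> t=5 \<or> t=6 \<or> t=7" by auto
    then show "?Q t" using a
      by (elim disjE; hypsubst; simp)
  qed
  show "\<forall>t\<in>{..<8}. (\<lambda>_. 1) t * (\<Prod>s\<in>{s\<in>{..<8}. E_adj 8 s t}. (if s=0 then \<alpha> 1 else if s=1 then \<alpha> 0 * \<alpha> 7 / (\<alpha> 3 * \<alpha> 5) else if s=2 then \<alpha> 3 else if s=3 then \<alpha> 2 / \<alpha> 1 else if s=4 then \<alpha> 5 / \<alpha> 7 else if s=5 then \<alpha> 4 / \<alpha> 1 else if s=6 then \<alpha> 7 else \<alpha> 6 * \<alpha> 1 / \<alpha> 4)) = \<alpha> t" (is "\<forall>t\<in>_. ?P t")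
  proof
    fix t assume "t \<in> {..<8::nat}"
    then have "t=0 \<or> t=1 \<or> t=2 \<or> t=3 \<or> t=4 \<or> t=5 \<or> t=6 \<or> t=7" by auto
    then show "?P t" using a
      by (elim disjE; hypsubst; simp only: n0 n1 n2 n3 n4 n5 n6 n7; simp add: field_simps)
  qed
qed

theorem mainTheorem17:
  fixes \<alpha> :: "nat \<Rightarrow> 'a::field"
  shows "((\<forall>t<6. \<alpha> t \<noteq> 0) \<longrightarrow> X_iso {..<6} (E_adj 6) \<alpha> (\<lambda>_. 1))
       \<and> ((\<forall>t<7. \<alpha> t \<noteq> 0) \<longrightarrow>
           (\<exists>a. a \<noteq> 0 \<and> X_iso {..<7} (E_adj 7) \<alpha> (\<lambda>t. if t = 6 then a else 1)))
       \<and> ((\<forall>t<8. \<alpha> t \<noteq> 0) \<longrightarrow> X_iso {..<8} (E_adj 8) \<alpha> (\<lambda>_. 1))"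
proof (intro conjI impI)
  assume h: "\<forall>t<7. \<alpha> t \<noteq> 0"
  then have "\<alpha> 6 * \<alpha> 1 / \<alpha> 4 \<noteq> 0" by auto
  then show "\<exists>a. a \<noteq> 0 \<and> X_iso {..<7} (E_adj 7) \<alpha> (\<lambda>t. if t = 6 then a else 1)"
    using E7[OF h] by blast
qed (auto intro: E6 E8)

end
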